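(* Let $M$ be a PVM on a finite-dimensional Hilbert space consisting of rank-one projections ($w(M)=1$) which commutes with a density operator $\sigma$. Then for every density operator $\rho$ and every $a\in\mathbb{R}$, $$\mathrm{P}^M_\rho\{\log\mathrm{P}^M_\sigma(\omega)\ge a\}\le\exp\Bigl(-\sup_{t\ge0}\bigl(at-\log\mathrm{Tr}\rho\sigma^t\bigr)\Bigr).$$
   Context: $\mathrm{P}^M_\rho(\omega)=\mathrm{Tr}\rho M_\omega$ is the outcome distribution of the PVM $M=\{M_\omega\}$ in state $\rho$; $M$ commutes with $\sigma$ if $\sigma M_\omega=M_\omega\sigma$ for all $\omega$; $w(M)=\sup_\omega\dim(\mathrm{range}\,M_\omega)$. *)

theory Defs
  imports "HOL-Analysis.Analysis"
begin

definition cinner :: "complex^'n \<Rightarrow> complex^'n \<Rightarrow> complex" where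
  "cinner x y = (\<Sum>i\<in>UNIV. cnj (x$i) * y$i)"

definition cadjoint :: "complex^'n^'n \<Rightarrow> complex^'n^'n" where
  "cadjoint A = (\<chi> i j. cnj (A$j$i))"

definition hermitian :: "complex^'n^'n \<Rightarrow> bool" where
  "hermitian A \<longleftrightarrow> cadjoint A = A"

definition positive_op :: "complex^'n^'n \<Rightarrow> bool" where
  "positive_op A \<longleftrightarrow> hermitian A \<and> (\<forall>x. 0 \<le> Re (cinner x (A *v x)))"

definition density_op :: "complex^'n^'n \<Rightarrow> bool" where
  "density_op A \<longleftrightarrow> positive_op A \<and> trace A = 1"

definition orth_proj :: "complex^'n^'n \<Rightarrow> bool" where
  "orth_proj P \<longleftrightarrow> hermitian P \<and> P ** P = P"

definition is_PVM :: "'w set \<Rightarrow> ('w \<Rightarrow> complex^'n^'n) \<Rightarrow> bool" where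
  "is_PVM \<Omega> M \<longleftrightarrow> finite \<Omega> \<and> (\<forall>\<omega>\<in>\<Omega>. orth_proj (M \<omega>)) \<and> (\<Sum>\<omega>\<in>\<Omega>. M \<omega>) = mat 1"

definition outcome_prob :: "complex^'n^'n \<Rightarrow> ('w \<Rightarrow> complex^'n^'n) \<Rightarrow> 'w \<Rightarrow> real" where
  "outcome_prob \<rho> M \<omega> = Re (trace (\<rho> ** M \<omega>))"

definition pvm_commutes :: "'w set \<Rightarrow> ('w \<Rightarrow> complex^'n^'n) \<Rightarrow> complex^'n^'n \<Rightarrow> bool" where
  "pvm_commutes \<Omega> M \<sigma> \<longleftrightarrow> (\<forall>\<omega>\<in>\<Omega>. \<sigma> ** M \<omega> = M \<omega> ** \<sigma>)"

definition pvm_width :: "'w set \<Rightarrow> ('w \<Rightarrow> complex^'n^'n) \<Rightarrow> nat" where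
  "pvm_width \<Omega> M = Sup ((\<lambda>\<omega>. vec.dim (range ((*v) (M \<omega>)))) ` \<Omega>)"

text \<open>Matrix power sigma^t of a positive operator via functional calculus:
  sigma^t acts as lambda powr t on every lambda-eigenvector (with 0 powr t = 0).\<close>
definition mpow :: "complex^'n^'n \<Rightarrow> real \<Rightarrow> complex^'n^'n" where
  "mpow \<sigma> t = (THE X. \<forall>v c. \<sigma> *v v = c *s v \<longrightarrow>
                      X *v v = complex_of_real (Re c powr t) *s v)"

definition log_ext :: "real \<Rightarrow> ereal" where
  "log_ext x = (if x > 0 then ereal (ln x) else -\<infinity>)"

definition exp_ext :: "ereal \<Rightarrow> ereal" where
  "exp_ext x = (case x of ereal r \<Rightarrow> ereal (exp r) | PInfty \<Rightarrow> \<infinity> | MInfty \<Rightarrow> 0)"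

end

theory Submission
  imports Defs
begin

lemma trace_smult: "trace (A ** ((c::real) *\<^sub>R B)) = of_real c * trace (A ** (B::complex^'n^'n))"
proof -
  have e: "\<And>z::complex. c *\<^sub>R z = of_real c * z" by (simp add: scaleR_conv_of_real)
  show ?thesis by (simp add: trace_def matrix_matrix_mult_def sum_distrib_left e mult.left_commute)
qed

lemma trace_sum: "trace (A ** (\<Sum>w\<in>S. (c w::real) *\<^sub>R B w)) = (\<Sum>w\<in>S. of_real (c w) * trace (A ** (B w::complex^'n^'n)))"
proof (induction S rule: infinite_finite_induct)
  case (empty)
  then show ?case by (simp add: trace_def matrix_matrix_mult_def)
next
  case (infinite)
  then show ?case by (simp add: trace_def matrix_matrix_mult_def)
next
  case (insert x F)
  then show ?case by (simp add: matrix_add_ldistrib trace_add trace_smult)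
qed

lemma pos_trace:
  fixes \<rho> P :: "complex^'n^'n"
  assumes "positive_op \<rho>" "hermitian P" "P ** P = P"
  shows "0 \<le> Re (trace (\<rho> ** P))"
proof -
  have herm: "P$i$j = cnj (P$j$i)" for i j
  proof -
    have "cadjoint P $ i $ j = P $ i $ j" using assms(2) unfolding hermitian_def by simp
    then show ?thesis unfolding cadjoint_def by simp
  qed
  have herm2: "P$i$j * z = cnj (P$j$i) * z" for i j z using herm[of i j] by simp
  define col where "col i = (\<chi> j. P$j$i)" for i
  have "trace (\<rho> ** P) = trace ((\<rho> ** P) ** P)" by (simp add: matrix_mul_assoc[symmetric] assms(3))
  also have "\<dots> = trace (P ** (\<rho> ** P))" by (rule trace_mul_sym)
  also have "\<dots> = (\<Sum>i\<in>UNIV. cinner (col i) (\<rho> *v col i))"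
    unfolding trace_def cinner_def col_def matrix_matrix_mult_def matrix_vector_mult_def
    by (simp add: herm2)
  finally have "Re (trace (\<rho> ** P)) = (\<Sum>i\<in>UNIV. Re (cinner (col i) (\<rho> *v col i)))" by simp
  also have "\<dots> \<ge> 0" using assms(1) unfolding positive_op_def by (simp add: sum_nonneg)
  finally show ?thesis .
qed


lemma mv_mult_assoc: "A *v (B *v x) = (A ** B) *v (x::'a::comm_ring_1^'n)"
  by (simp add: matrix_vector_mul_assoc)

lemma mv_smult: "A *v ((c::'a::comm_ring_1) *s x) = c *s (A *v (x::'a^'n))"
  by (simp add: vec_eq_iff matrix_vector_mult_def sum_distrib_left algebra_simps)

lemma mv_axis: "(A *v axis j (1::'a::comm_ring_1)) $ i = A$i$j"
  by (simp add: matrix_vector_mult_def axis_def if_distrib cong: if_cong)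

lemma rank1:
  fixes P \<sigma> :: "complex^'n^'n"
  assumes PP: "P ** P = P" and dim: "vec.dim (range ((*v) P)) \<le> 1" and comm: "\<sigma> ** P = P ** \<sigma>"
  shows "\<sigma> *v (P *v x) = trace (\<sigma> ** P) *s (P *v x)"
proof (cases "P = 0")
  case True
  then show ?thesis by simp
next
  case False
  then obtain y where ey: "P *v y \<noteq> 0" by (metis matrix_eq matrix_vector_mult_0)
  define e where "e = P *v y"
  obtain B where B: "B \<subseteq> range ((*v) P)" "vec.independent B" "range ((*v) P) \<subseteq> vec.span B"
      "card B = vec.dim (range ((*v) P))"
    by (rule vec.basis_exists)
  have "finite B" using B(2) by (rule vec.finiteI_independent)
  have "B \<noteq> {}"
  proof
    assume "B = {}"
    with B(3) have "P *v y \<in> vec.span {}" by blast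
    then have "P *v y \<in> {0}" by simp
    with ey show False by simp
  qed
  then have "card B = 1" 
  proof -
    have "card B > 0" using \<open>B \<noteq> {}\<close> \<open>finite B\<close> by (simp add: card_gt_0_iff)
    then show ?thesis using dim B(4) by linarith
  qed
  then obtain b where b: "B = {b}" by (rule card_1_singletonE)
  have hb: "\<exists>k. P *v x = k *s b" for x using B(3) b by (auto simp: vec.span_singleton)
  obtain k0 where k0: "e = k0 *s b" using hb e_def by blast
  have "k0 \<noteq> 0" using k0 ey e_def by auto
  have he: "\<exists>k. P *v x = k *s e" for x
  proof -
    obtain k where "P *v x = k *s b" using hb by blast
    then have "P *v x = (k / k0) *s e" using k0 \<open>k0 \<noteq> 0\<close> by (simp add: vector_smult_assoc)
    then show ?thesis by blast
  qed
  then obtain kf where kf: "\<And>x. P *v x = kf x *s e" by metis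
  have Pe: "P *v e = e" unfolding e_def by (simp add: mv_mult_assoc PP)
  define c where "c = kf (\<sigma> *v y)"
  have se: "\<sigma> *v e = c *s e" unfolding e_def c_def
    by (metis kf mv_mult_assoc comm e_def)
  have hs: "\<sigma> *v (P *v z) = c *s (P *v z)" for z
    by (simp add: kf mv_smult se vector_smult_assoc mult.commute)
  have Pij: "P$i$j = kf (axis j 1) * e$i" for i j
    using mv_axis[of P j i] kf[of "axis j 1"] by simp
  have sPij: "(\<sigma> ** P)$i$j = c * kf (axis j 1) * e$i" for i j
    using mv_axis[of "\<sigma> ** P" j i] hs[of "axis j 1"] kf[of "axis j 1"]
    by (simp add: mv_mult_assoc[symmetric])
  define s where "s = (\<Sum>j\<in>UNIV. kf (axis j 1) * e$j)"
  have "e \<noteq> 0" using ey e_def by simp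
  then obtain i where "e$i \<noteq> 0" by (auto simp: vec_eq_iff)
  have "e$i = (P *v e)$i" using Pe by simp
  also have "\<dots> = e$i * s" unfolding s_def matrix_vector_mult_def
    by (simp add: Pij sum_distrib_left mult_ac)
  finally have "s = 1" using \<open>e$i \<noteq> 0\<close> by simp
  have "trace (\<sigma> ** P) = c * s" unfolding trace_def s_def
    by (simp add: sPij sum_distrib_left mult_ac)
  with \<open>s = 1\<close> hs show ?thesis by simp
qed


lemma sum_mv: "(\<Sum>w\<in>S. A w) *v (x::'a::comm_ring_1^'n) = (\<Sum>w\<in>S. A w *v x)"
  by (induction S rule: infinite_finite_induct) (auto simp: matrix_vector_mult_add_rdistrib)

lemma mv_sum: "A *v (\<Sum>w\<in>S. f w) = (\<Sum>w\<in>S. A *v (f w::'a::comm_ring_1^'n))"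
  by (induction S rule: infinite_finite_induct) (auto simp: matrix_vector_right_distrib)

lemma smult_sum: "(c::'a::comm_ring_1) *s (\<Sum>w\<in>S. f w) = (\<Sum>w\<in>S. c *s (f w::'a^'n))"
  by (induction S rule: infinite_finite_induct) (auto simp: vector_ssub_ldistrib vec_eq_iff algebra_simps)

lemma smult_mv: "((c::real) *\<^sub>R A) *v x = c *\<^sub>R (A *v (x::complex^'n))"
  by (simp add: vec_eq_iff matrix_vector_mult_def scaleR_sum_right)

lemma scaleR_smult: "(r::real) *\<^sub>R (w::complex^'n) = complex_of_real r *s w"
proof -
  have e: "\<And>z::complex. r *\<^sub>R z = of_real r * z" by (simp add: scaleR_conv_of_real)
  show ?thesis by (simp add: vec_eq_iff e)
qed

lemma exp_ext_mono: "x \<le> y \<Longrightarrow> exp_ext x \<le> exp_ext y"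
  by (cases x; cases y) (auto simp: exp_ext_def)

lemma exp_ext_nonneg: "0 \<le> exp_ext x"
  by (cases x) (auto simp: exp_ext_def)

theorem lemma12:
  fixes \<Omega> :: "'w set" and M :: "'w \<Rightarrow> complex^'n^'n"
    and \<sigma> \<rho> :: "complex^'n^'n" and a :: real
  assumes "is_PVM \<Omega> M"
    and "pvm_width \<Omega> M = 1"
    and "density_op \<sigma>"
    and "pvm_commutes \<Omega> M \<sigma>"
    and "density_op \<rho>"
  shows "ereal (\<Sum>\<omega>\<in>{\<omega>\<in>\<Omega>. log_ext (outcome_prob \<sigma> M \<omega>) \<ge> ereal a}. outcome_prob \<rho> M \<omega>)
         \<le> exp_ext (- (SUP t\<in>{0::real..}. ereal (a * t) - log_ext (Re (trace (\<rho> ** mpow \<sigma> t)))))"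
proof -
  have fin: "finite \<Omega>" and proj: "\<And>w. w \<in> \<Omega> \<Longrightarrow> orth_proj (M w)" and sumM: "(\<Sum>w\<in>\<Omega>. M w) = mat 1"
    using assms(1) unfolding is_PVM_def by auto
  have dimw: "vec.dim (range ((*v) (M w))) \<le> 1" if "w \<in> \<Omega>" for w
  proof -
    have "vec.dim (range ((*v) (M w))) \<le> pvm_width \<Omega> M" unfolding pvm_width_def
      by (rule cSup_upper) (use that fin in auto)
    then show ?thesis using assms(2) by simp
  qed
  define c where "c w = trace (\<sigma> ** M w)" for w
  define p where "p w = outcome_prob \<sigma> M w" for w
  define q where "q w = outcome_prob \<rho> M w" for w
  have pc: "p w = Re (c w)" for w unfolding p_def c_def outcome_prob_def by simp
  have K: "\<sigma> *v (M w *v x) = c w *s (M w *v x)" if "w \<in> \<Omega>" for w x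
    unfolding c_def
    by (rule rank1) (use proj[OF that] dimw[OF that] assms(4) that in \<open>auto simp: orth_proj_def pvm_commutes_def\<close>)
  have q0: "q w \<ge> 0" if "w \<in> \<Omega>" for w
    unfolding q_def outcome_prob_def
    by (rule pos_trace) (use proj[OF that] assms(5) in \<open>auto simp: orth_proj_def density_op_def\<close>)
  define X where "X t = (\<Sum>w\<in>\<Omega>. (p w powr t) *\<^sub>R M w)" for t
  have mp: "mpow \<sigma> t = X t" for t
    unfolding mpow_def
  proof (rule the_equality)
    show "\<forall>v ca. \<sigma> *v v = ca *s v \<longrightarrow> X t *v v = complex_of_real (Re ca powr t) *s v"
    proof (intro allI impI)
      fix v ca assume ev: "\<sigma> *v v = ca *s v"
      have hterm: "(p w powr t) *\<^sub>R (M w *v v) = complex_of_real (Re ca powr t) *s (M w *v v)"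
        if "w \<in> \<Omega>" for w
      proof -
        have "c w *s (M w *v v) = \<sigma> *v (M w *v v)" using K[OF that] by simp
        also have "\<dots> = M w *v (\<sigma> *v v)"
          using assms(4) that by (simp add: pvm_commutes_def mv_mult_assoc)
        also have "\<dots> = ca *s (M w *v v)" by (simp add: ev mv_smult)
        finally have "c w = ca \<or> M w *v v = 0" by simp
        then show ?thesis by (auto simp: pc scaleR_smult)
      qed
      have "X t *v v = (\<Sum>w\<in>\<Omega>. (p w powr t) *\<^sub>R (M w *v v))"
        unfolding X_def sum_mv by (simp add: smult_mv)
      also have "\<dots> = (\<Sum>w\<in>\<Omega>. complex_of_real (Re ca powr t) *s (M w *v v))"
        by (rule sum.cong) (auto simp: hterm)
      also have "\<dots> = complex_of_real (Re ca powr t) *s v"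
        by (simp add: smult_sum[symmetric] sum_mv[symmetric] sumM)
      finally show "X t *v v = complex_of_real (Re ca powr t) *s v" .
    qed
  next
    fix Y assume Y: "\<forall>v ca. \<sigma> *v v = ca *s v \<longrightarrow> Y *v v = complex_of_real (Re ca powr t) *s v"
    show "Y = X t" unfolding matrix_eq
    proof
      fix x
      have "Y *v x = Y *v ((\<Sum>w\<in>\<Omega>. M w) *v x)" by (simp add: sumM)
      also have "\<dots> = (\<Sum>w\<in>\<Omega>. Y *v (M w *v x))" by (simp add: sum_mv mv_sum)
      also have "\<dots> = (\<Sum>w\<in>\<Omega>. (p w powr t) *\<^sub>R (M w *v x))"
        by (rule sum.cong) (auto simp: Y K pc scaleR_smult)
      also have "\<dots> = X t *v x" unfolding X_def sum_mv by (simp add: smult_mv)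
      finally show "Y *v x = X t *v x" .
    qed
  qed
  define T where "T t = Re (trace (\<rho> ** mpow \<sigma> t))" for t
  have T: "T t = (\<Sum>w\<in>\<Omega>. p w powr t * q w)" for t
    unfolding T_def mp X_def trace_sum q_def outcome_prob_def by (simp add: Re_sum)
  define A where "A = {\<omega>\<in>\<Omega>. log_ext (outcome_prob \<sigma> M \<omega>) \<ge> ereal a}"
  define S where "S = (\<Sum>w\<in>A. q w)"
  have AO: "A \<subseteq> \<Omega>" unfolding A_def by auto
  have markov: "exp (a * t) * S \<le> T t" if "t \<ge> 0" for t
  proof -
    have "exp (a * t) * S = (\<Sum>w\<in>A. exp (a * t) * q w)" unfolding S_def by (simp add: sum_distrib_left)
    also have "\<dots> \<le> (\<Sum>w\<in>A. p w powr t * q w)"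
    proof (rule sum_mono)
      fix w assume wA: "w \<in> A"
      then have "log_ext (p w) \<ge> ereal a" unfolding A_def p_def by auto
      then have pw: "p w > 0" "ln (p w) \<ge> a" unfolding log_ext_def by (auto split: if_splits)
      have "a * t \<le> ln (p w) * t" using pw that by (simp add: mult_right_mono)
      then have "exp (a * t) \<le> exp (t * ln (p w))" by (simp add: mult.commute)
      then have "exp (a * t) \<le> p w powr t" using pw by (simp add: powr_def)
      then show "exp (a * t) * q w \<le> p w powr t * q w"
        using q0 wA AO by (simp add: mult_right_mono subset_iff)
    qed
    also have "\<dots> \<le> (\<Sum>w\<in>\<Omega>. p w powr t * q w)"
      by (rule sum_mono2) (use fin AO q0 in auto)
    finally show ?thesis by (simp add: T)
  qed
  show ?thesis
  proof (cases "S > 0")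
    case False
    then have "ereal S \<le> 0" by simp
    then show ?thesis using exp_ext_nonneg unfolding S_def A_def q_def by (rule order_trans)
  next
    case True
    have "(SUP t\<in>{0::real..}. ereal (a * t) - log_ext (T t)) \<le> ereal (- ln S)"
    proof (rule SUP_least)
      fix t :: real assume "t \<in> {0..}"
      then have m: "exp (a * t) * S \<le> T t" using markov by simp
      have Tp: "T t > 0" using m True by (meson exp_gt_zero mult_pos_pos less_le_trans)
      have "ln (exp (a * t) * S) \<le> ln (T t)" using m True Tp by simp
      then have "a * t + ln S \<le> ln (T t)" using True by (simp add: ln_mult)
      then show "ereal (a * t) - log_ext (T t) \<le> ereal (- ln S)"
        using Tp by (simp add: log_ext_def)
    qed
    then have "ereal (ln S) \<le> - (SUP t\<in>{0::real..}. ereal (a * t) - log_ext (T t))"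
      by (metis ereal_minus_le_minus ereal_uminus_uminus uminus_ereal.simps(1))
    then have "exp_ext (ereal (ln S)) \<le> exp_ext (- (SUP t\<in>{0::real..}. ereal (a * t) - log_ext (T t)))"
      by (rule exp_ext_mono)
    then show ?thesis using True unfolding T_def S_def A_def q_def exp_ext_def by simp
  qed
qed

end
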